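(* Let $d=(d_1,\dots,d_n)$ be a degree sequence with complementary sequence $\overline d$, and let $k\in\{1,\dots,m(d)\}$. Suppose that no nonzero entry in row $k+1$ of $M(d)$ lies in the same column as a nonzero entry in row $k$ (this condition is vacuous if $k=n$), and suppose that the first $k$ rows of $M(d)$ contain at least one nonzero entry. If the leftmost nonzero entry among the first $k$ rows of $M(d)$ lies in column $j$, then $\Delta_{n+1-j}(\overline d)=\Delta_k(d)$ (and $1\le n+1-j\le m(\overline d)$).
   Context: Degree sequences $d=(d_1,\dots,d_n)$ (of finite simple graphs, terms may be $0$) are listed in nonincreasing order; $\overline d=(n-1-d_n,\dots,n-1-d_1)$ is the complementary sequence. $m(d)=\max\{i : d_i\ge i-1\}$. For integers $k\ge 0$, $\Delta_k(d)=k(k-1)+\sum_{i>k}\min\{k,d_i\}-\sum_{i\le k}d_i$. The corrected Ferrers diagram $F(d)$ is the $n\times n$ matrix whose diagonal entries are $0$ and in which, for each $i$, the first $d_i$ off-diagonal entries of row $i$ (reading left to right, skipping the diagonal position) are $1$ and all other entries are $0$. The difference matrix is $M(d)=F(d)^T-F(d)$. *)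

theory Defs
  imports Main
begin

text \<open>A sequence d = (d_1,...,d_n) is a nat list; entry d_i (1-based) is  d ! (i - 1).\<close>

definition ent :: "nat list \<Rightarrow> nat \<Rightarrow> nat" where
  "ent d i = d ! (i - 1)"

definition degree_sequence :: "nat list \<Rightarrow> bool" where
  "degree_sequence d \<longleftrightarrow>
     sorted_wrt (\<ge>) d \<and>
     (\<exists>E :: nat \<Rightarrow> nat \<Rightarrow> bool.
        (\<forall>u v. E u v \<longrightarrow> u \<in> {1..length d} \<and> v \<in> {1..length d}) \<and>
        (\<forall>u v. E u v \<longleftrightarrow> E v u) \<and> (\<forall>u. \<not> E u u) \<and>
        (\<forall>i \<in> {1..length d}. card {j. E i j} = ent d i))"

definition comp_seq :: "nat list \<Rightarrow> nat list" where
  "comp_seq d = map (\<lambda>x. length d - 1 - x) (rev d)"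

definition mval :: "nat list \<Rightarrow> nat" where
  "mval d = Max (insert 0 {i \<in> {1..length d}. ent d i \<ge> i - 1})"

definition Delta :: "nat \<Rightarrow> nat list \<Rightarrow> int" where
  "Delta k d = int (k * (k - 1)) + (\<Sum>i\<in>{k<..length d}. int (min k (ent d i)))
               - (\<Sum>i\<in>{1..k}. int (ent d i))"

text \<open>Corrected Ferrers diagram, 1-based indices i,j in {1..n}: in row i, the off-diagonal
  position j is the (j)-th off-diagonal position if j < i and the (j-1)-th if j > i.\<close>
definition ferrers :: "nat list \<Rightarrow> nat \<Rightarrow> nat \<Rightarrow> int" where
  "ferrers d i j = (if i \<in> {1..length d} \<and> j \<in> {1..length d} \<and> j \<noteq> i \<and>
                       (if j < i then j else j - 1) \<le> ent d i then 1 else 0)"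

definition diffM :: "nat list \<Rightarrow> nat \<Rightarrow> nat \<Rightarrow> int" where
  "diffM d i j = ferrers d j i - ferrers d i j"

end

theory Submission
  imports Defs
begin


lemma ferrers_alt: "ferrers d i c = of_bool (1 \<le> i \<and> i \<le> length d \<and> 1 \<le> c \<and> c \<le> length d \<and>
   (c < i \<and> c \<le> ent d i \<or> i < c \<and> c \<le> ent d i + 1))"
  unfolding ferrers_def by auto

lemma row_count:
  assumes "1 \<le> c" "c \<le> length d" "ent d c \<le> length d - 1" "k \<le> length d"
  shows "(\<Sum>i\<in>{1..k}. ferrers d c i) = int (if c \<le> k then min (k-1) (ent d c) else min k (ent d c))"
proof -
  have "(\<Sum>i\<in>{1..k}. ferrers d c i) = int (card ({1..k} \<inter> {i. (i < c \<and> i \<le> ent d c \<or> c < i \<and> i \<le> ent d c + 1)}))"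
    unfolding ferrers_alt
    apply (subst sum_of_bool_eq[symmetric], simp)
    apply (rule sum.cong, simp)
    using assms by auto
  also have "card ({1..k} \<inter> {i. (i < c \<and> i \<le> ent d c \<or> c < i \<and> i \<le> ent d c + 1)}) =
     (if c \<le> k then min (k-1) (ent d c) else min k (ent d c))"
  proof (cases "ent d c < c")
    case True
    then have "{1..k} \<inter> {i. (i < c \<and> i \<le> ent d c \<or> c < i \<and> i \<le> ent d c + 1)} = {1..min k (ent d c)}"
      by auto
    then show ?thesis using True by auto
  next
    case False
    then have "{1..k} \<inter> {i. (i < c \<and> i \<le> ent d c \<or> c < i \<and> i \<le> ent d c + 1)} = {1..min k (ent d c + 1)} - {c}"
      by auto
    moreover have "c \<le> ent d c + 1" using False by simp
    ultimately show ?thesis using assms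
      by (cases "c \<le> k") (simp_all add: card_Diff_singleton_if)
  qed
  finally show ?thesis .
qed



definition good :: "nat list \<Rightarrow> bool" where
  "good d \<longleftrightarrow> (\<forall>a b. 1 \<le> a \<longrightarrow> a \<le> b \<longrightarrow> b \<le> length d \<longrightarrow> ent d b \<le> ent d a) \<and>
              (\<forall>i. 1 \<le> i \<longrightarrow> i \<le> length d \<longrightarrow> ent d i \<le> length d - 1)"

lemma ds_good:
  assumes "degree_sequence d" shows "good d"
  unfolding good_def
proof (intro conjI allI impI)
  fix a b assume ab: "1 \<le> a" "a \<le> b" "b \<le> length d"
  have s: "sorted_wrt (\<ge>) d" using assms unfolding degree_sequence_def by blast
  show "ent d b \<le> ent d a"
  proof (cases "a = b")
    case False
    then have "a - 1 < b - 1" using ab by simp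
    then show ?thesis using sorted_wrt_nth_less[OF s, of "a-1" "b-1"] ab unfolding ent_def by simp
  qed simp
next
  fix i assume i: "1 \<le> i" "i \<le> length d"
  obtain E :: "nat \<Rightarrow> nat \<Rightarrow> bool" where
    E1: "\<forall>u v. E u v \<longrightarrow> u \<in> {1..length d} \<and> v \<in> {1..length d}" and
    E3: "\<forall>u. \<not> E u u" and E4: "\<forall>i \<in> {1..length d}. card {j. E i j} = ent d i"
    using assms unfolding degree_sequence_def by blast
  have "{j. E i j} \<subseteq> {1..length d} - {i}" using E1 E3 by auto
  then have "card {j. E i j} \<le> card ({1..length d} - {i})" by (intro card_mono) auto
  also have "\<dots> = length d - 1" using i by simp
  finally show "ent d i \<le> length d - 1" using E4 i by simp
qed

lemma row_sum:
  assumes "good d" "1 \<le> c" "c \<le> length d"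
  shows "(\<Sum>i\<in>{1..length d}. ferrers d c i) = int (ent d c)"
  using row_count[of c d "length d"] assms unfolding good_def by auto

lemma split_ivl: "k \<le> n \<Longrightarrow> {1..n} = {1..k} \<union> {k<..(n::nat)}" by auto

lemma RS:
  assumes "good d" "1 \<le> k" "k \<le> length d" "\<forall>c. 1 \<le> c \<longrightarrow> c \<le> k \<longrightarrow> k - 1 \<le> ent d c"
  shows "(\<Sum>i\<in>{1..k}. \<Sum>c\<in>{1..length d}. diffM d i c) = Delta k d"
proof -
  let ?n = "length d"
  have "(\<Sum>i\<in>{1..k}. \<Sum>c\<in>{1..?n}. diffM d i c) =
        (\<Sum>i\<in>{1..k}. \<Sum>c\<in>{1..?n}. ferrers d c i) - (\<Sum>i\<in>{1..k}. \<Sum>c\<in>{1..?n}. ferrers d i c)"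
    unfolding diffM_def by (simp add: sum_subtractf)
  also have "(\<Sum>i\<in>{1..k}. \<Sum>c\<in>{1..?n}. ferrers d i c) = (\<Sum>i\<in>{1..k}. int (ent d i))"
    using row_sum[OF assms(1)] assms(3) by (intro sum.cong) auto
  also have "(\<Sum>i\<in>{1..k}. \<Sum>c\<in>{1..?n}. ferrers d c i) = (\<Sum>c\<in>{1..?n}. \<Sum>i\<in>{1..k}. ferrers d c i)"
    by (rule sum.swap)
  also have "\<dots> = (\<Sum>c\<in>{1..?n}. int (if c \<le> k then min (k-1) (ent d c) else min k (ent d c)))"
    using row_count assms unfolding good_def by (intro sum.cong) auto
  also have "\<dots> = (\<Sum>c\<in>{1..k}. int (if c \<le> k then min (k-1) (ent d c) else min k (ent d c)))
                + (\<Sum>c\<in>{k<..?n}. int (if c \<le> k then min (k-1) (ent d c) else min k (ent d c)))"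
    by (subst split_ivl[OF assms(3)], rule sum.union_disjoint) auto
  also have "(\<Sum>c\<in>{1..k}. int (if c \<le> k then min (k-1) (ent d c) else min k (ent d c))) = (\<Sum>c\<in>{1..k}. int (k - 1))"
    using assms(4) by (intro sum.cong) auto
  also have "\<dots> = int (k * (k - 1))" using assms(2) by (simp add: of_nat_diff)
  also have "(\<Sum>c\<in>{k<..?n}. int (if c \<le> k then min (k-1) (ent d c) else min k (ent d c))) = (\<Sum>c\<in>{k<..?n}. int (min k (ent d c)))"
    by (intro sum.cong) auto
  finally show ?thesis unfolding Delta_def by simp
qed

lemma mval_le_len: "mval d \<le> length d"
  unfolding mval_def by (subst Max_le_iff) auto

lemma mval_ge:
  assumes "good d" "1 \<le> k" "k \<le> mval d" "1 \<le> c" "c \<le> k"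
  shows "k - 1 \<le> ent d c"
proof -
  let ?S = "insert 0 {i \<in> {1..length d}. ent d i \<ge> i - 1}"
  have fin: "finite ?S" by simp
  have "mval d \<in> ?S" unfolding mval_def by (rule Max_in[OF fin]) simp
  then have m: "mval d \<in> {1..length d}" "ent d (mval d) \<ge> mval d - 1" using assms(2,3) by auto
  have "ent d (mval d) \<le> ent d c" using assms m unfolding good_def by auto
  then show ?thesis using m assms(3) by linarith
qed

lemma mval_le:
  assumes "1 \<le> K" "K \<le> length d" "K - 1 \<le> ent d K"
  shows "K \<le> mval d"
  unfolding mval_def by (rule Max_ge) (use assms in auto)

lemma comp_len[simp]: "length (comp_seq d) = length d"
  unfolding comp_seq_def by simp

lemma comp_ent:
  assumes "1 \<le> i" "i \<le> length d"
  shows "ent (comp_seq d) i = length d - 1 - ent d (length d + 1 - i)"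
  using assms unfolding comp_seq_def ent_def by (simp add: rev_nth)

lemma comp_good:
  assumes "good d" shows "good (comp_seq d)"
  unfolding good_def
proof (intro conjI allI impI)
  fix a b assume ab: "1 \<le> a" "a \<le> b" "b \<le> length (comp_seq d)"
  have "ent d (length d + 1 - a) \<le> ent d (length d + 1 - b)"
    using assms ab unfolding good_def by auto
  then show "ent (comp_seq d) b \<le> ent (comp_seq d) a" using ab by (simp add: comp_ent)
next
  fix i assume "1 \<le> i" "i \<le> length (comp_seq d)"
  then show "ent (comp_seq d) i \<le> length (comp_seq d) - 1" by (simp add: comp_ent)
qed

lemma ferrers_comp:
  assumes "good d" "1 \<le> i" "i \<le> length d" "1 \<le> c" "c \<le> length d" "i \<noteq> c"
  shows "ferrers (comp_seq d) i c = 1 - ferrers d (length d + 1 - i) (length d + 1 - c)"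
proof -
  have b: "ent d (length d + 1 - i) \<le> length d - 1" using assms unfolding good_def by auto
  show ?thesis unfolding ferrers_alt using assms b by (auto simp: comp_ent)
qed

lemma diffM_comp:
  assumes "good d" "1 \<le> i" "i \<le> length d" "1 \<le> c" "c \<le> length d"
  shows "diffM (comp_seq d) i c = diffM d (length d + 1 - c) (length d + 1 - i)"
proof (cases "i = c")
  case True then show ?thesis unfolding diffM_def by simp
next
  case False
  then show ?thesis unfolding diffM_def using ferrers_comp[OF assms(1)] assms by auto
qed

lemma diffM_lt:
  assumes "1 \<le> i" "i < c" "c \<le> length d"
  shows "diffM d i c = of_bool (i \<le> ent d c) - of_bool (c \<le> ent d i + 1)"
  unfolding diffM_def ferrers_alt using assms by auto

lemma diffM_gt:
  assumes "1 \<le> c" "c < i" "i \<le> length d"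
  shows "diffM d i c = of_bool (i \<le> ent d c + 1) - of_bool (c \<le> ent d i)"
  unfolding diffM_def ferrers_alt using assms by auto

lemma diffM_diag: "diffM d i i = 0" unfolding diffM_def by simp



lemma good_mono: "good d \<Longrightarrow> 1 \<le> x \<Longrightarrow> x \<le> y \<Longrightarrow> y \<le> length d \<Longrightarrow> ent d y \<le> ent d x"
  unfolding good_def by blast

lemma block:
  assumes g: "good d" and k1: "1 \<le> k" and km: "k \<le> mval d"
    and h4: "k < length d \<longrightarrow>
           (\<forall>c \<in> {1..length d}. \<not> (diffM d (k + 1) c \<noteq> 0 \<and> diffM d k c \<noteq> 0))"
    and j: "j \<in> {1..length d}"
    and h7: "\<exists>i \<in> {1..k}. diffM d i j \<noteq> 0"
    and h8: "\<forall>c \<in> {1..<j}. \<forall>i \<in> {1..k}. diffM d i c = 0"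
  shows "k < j \<and> ent d j \<le> j - 1 \<and>
         (\<forall>r c. k < r \<longrightarrow> r \<le> length d \<longrightarrow> j \<le> c \<longrightarrow> c \<le> length d \<longrightarrow> diffM d r c = 0)"
proof -
  let ?n = "length d"
  have kn: "k \<le> ?n" using km mval_le_len[of d] by linarith
  have D: "\<And>c. 1 \<le> c \<Longrightarrow> c \<le> k \<Longrightarrow> k - 1 \<le> ent d c" using mval_ge[OF g k1 km] by blast
  obtain i0 where i0: "1 \<le> i0" "i0 \<le> k" "diffM d i0 j \<noteq> 0" using h7 by auto
  have kj: "k < j"
  proof (rule ccontr)
    assume "\<not> k < j"
    then have jk: "j \<le> k" by simp
    have Di0: "k - 1 \<le> ent d i0" and Dj: "k - 1 \<le> ent d j" using D i0 jk j by auto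
    consider "i0 = j" | "i0 < j" | "j < i0" by linarith
    then show False
    proof cases
      case 1 then show ?thesis using i0 diffM_diag by metis
    next
      case 2
      have "i0 \<le> ent d j" "j \<le> ent d i0 + 1" using 2 jk Di0 Dj by linarith+
      then show ?thesis using diffM_lt[of i0 j d] i0 j 2 by simp
    next
      case 3
      have "i0 \<le> ent d j + 1" "j \<le> ent d i0" using 3 jk Di0 Dj i0 by linarith+
      then show ?thesis using diffM_gt[of j i0 d] i0 j 3 kn by simp
    qed
  qed
  have jn: "j \<le> ?n" and kn': "k < ?n" using j kj by auto
  have nc: "\<not> (diffM d (k + 1) j \<noteq> 0 \<and> diffM d k j \<noteq> 0)" using h4 kn' j by blast
  have Mi0: "diffM d i0 j = of_bool (i0 \<le> ent d j) - of_bool (j \<le> ent d i0 + 1)"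
    using diffM_lt[of i0 j d] i0 kj jn by simp
  have Mk: "diffM d k j = of_bool (k \<le> ent d j) - of_bool (j \<le> ent d k + 1)"
    using diffM_lt[of k j d] k1 kj jn by simp
  have mk_i0: "ent d k \<le> ent d i0" using good_mono[OF g] i0 kn by blast
  have mk1: "ent d (k+1) \<le> ent d k" using good_mono[OF g, of k "k+1"] k1 kn' by simp
  have mjk: "ent d j \<le> ent d (k+1)" using good_mono[OF g, of "k+1" j] kj jn by simp
  show ?thesis
  proof (cases "i0 \<le> ent d j")
    case A: True
    then have A2: "\<not> j \<le> ent d i0 + 1" using Mi0 i0 by auto
    have ajk: "ent d j \<le> k"
    proof (rule ccontr)
      assume "\<not> ent d j \<le> k"
      then have big: "k + 1 \<le> ent d j" by simp
      have "j \<noteq> k + 1" using big mjk mk1 mk_i0 A2 by auto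
      then have kj2: "k + 1 < j" using kj by simp
      have m1: "ent d j \<le> ent d (j-1)" using good_mono[OF g, of "j-1" j] kj2 jn by simp
      have "diffM d k (j-1) = 0" using h8 kj2 k1 by auto
      moreover have "diffM d k (j-1) = of_bool (k \<le> ent d (j-1)) - of_bool (j - 1 \<le> ent d k + 1)"
        using diffM_lt[of k "j-1" d] k1 kj2 jn by simp
      ultimately have "j - 1 \<le> ent d k + 1" using big m1 by (auto split: if_splits)
      moreover have "diffM d (k+1) j = of_bool (k+1 \<le> ent d j) - of_bool (j \<le> ent d (k+1) + 1)"
        using diffM_lt[of "k+1" j d] kj2 jn by simp
      ultimately show False using nc Mk big mk1 mk_i0 A2 by auto
    qed
    have ajj: "ent d j \<le> j - 1" using A2 good_mono[OF g, of i0 j] i0 kj jn by simp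
    have blk: "diffM d r c = 0" if r: "k < r" "r \<le> ?n" and c: "j \<le> c" "c \<le> ?n" for r c
    proof -
      have mc: "ent d c \<le> ent d j" using good_mono[OF g, of j c] c kj by simp
      have mr: "ent d r \<le> ent d i0" using good_mono[OF g, of i0 r] r i0 by simp
      consider "r = c" | "r < c" | "c < r" by linarith
      then show ?thesis
      proof cases
        case 1 then show ?thesis by (simp add: diffM_diag)
      next
        case 2 then show ?thesis using diffM_lt[of r c d] r c mc mr ajk A2 by simp
      next
        case 3
        have "ent d r \<le> ent d c" using good_mono[OF g, of c r] r c 3 kj by simp
        then show ?thesis using diffM_gt[of c r d] r c 3 mc ajk A2 kj by simp
      qed
    qed
    show ?thesis using kj ajj blk by blast
  next
    case B: False
    then have B2: "j \<le> ent d i0 + 1" using Mi0 i0(3) by (auto split: if_splits)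
    have ajk: "ent d j < k" using B i0 by simp
    have cl: "ent d (k+1) + 2 \<le> j" if "k + 1 < j"
    proof (rule ccontr)
      assume "\<not> ent d (k+1) + 2 \<le> j"
      moreover have "diffM d (k+1) j = of_bool (k+1 \<le> ent d j) - of_bool (j \<le> ent d (k+1) + 1)"
        using diffM_lt[of "k+1" j d] that jn by simp
      ultimately show False using nc Mk ajk mk1 by auto
    qed
    have blk: "diffM d r c = 0" if r: "k < r" "r \<le> ?n" and c: "j \<le> c" "c \<le> ?n" for r c
    proof -
      have mc: "ent d c \<le> ent d j" using good_mono[OF g, of j c] c kj by simp
      consider "r = c" | "r < c" | "c < r" by linarith
      then show ?thesis
      proof cases
        case 1 then show ?thesis by (simp add: diffM_diag)
      next
        case 2
        have "\<not> c \<le> ent d r + 1"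
        proof (cases "j \<le> r")
          case True
          then have "ent d r \<le> ent d j" using good_mono[OF g, of j r] r kj by simp
          then show ?thesis using ajk r 2 by simp
        next
          case False
          then have "ent d r \<le> ent d (k+1)" using good_mono[OF g, of "k+1" r] r by simp
          then show ?thesis using cl[of] False r c by simp
        qed
        then show ?thesis using diffM_lt[of r c d] r c mc ajk 2 by simp
      next
        case 3
        have "ent d r \<le> ent d c" using good_mono[OF g, of c r] r c 3 kj by simp
        then show ?thesis using diffM_gt[of c r d] r c 3 mc ajk kj by simp
      qed
    qed
    show ?thesis using kj ajk blk by auto
  qed
qed



lemma flip_sum:
  fixes g :: "nat \<Rightarrow> int"
  assumes "1 \<le> a" "b \<le> n"
  shows "(\<Sum>x\<in>{a..b}. g (n + 1 - x)) = (\<Sum>y\<in>{n+1-b..n+1-a}. g y)"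
  by (rule sum.reindex_bij_witness[of _ "\<lambda>y. n + 1 - y" "\<lambda>y. n + 1 - y"]) (use assms in auto)

lemma reindex:
  assumes g: "good d" and j: "1 \<le> j" "j \<le> length d"
  shows "(\<Sum>i\<in>{1..length d + 1 - j}. \<Sum>c\<in>{1..length d}. diffM (comp_seq d) i c)
       = (\<Sum>r\<in>{1..length d}. \<Sum>c\<in>{j..length d}. diffM d r c)"
proof -
  let ?n = "length d"
  have "(\<Sum>i\<in>{1..?n + 1 - j}. \<Sum>c\<in>{1..?n}. diffM (comp_seq d) i c)
      = (\<Sum>i\<in>{1..?n + 1 - j}. \<Sum>c\<in>{1..?n}. diffM d (?n + 1 - c) (?n + 1 - i))"
    using diffM_comp[OF g] j by (intro sum.cong refl) auto
  also have "\<dots> = (\<Sum>i\<in>{1..?n + 1 - j}. \<Sum>r\<in>{1..?n}. diffM d r (?n + 1 - i))"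
  proof (rule sum.cong[OF refl])
    fix i assume "i \<in> {1..?n + 1 - j}"
    show "(\<Sum>c\<in>{1..?n}. diffM d (?n + 1 - c) (?n + 1 - i)) = (\<Sum>r\<in>{1..?n}. diffM d r (?n + 1 - i))"
      using flip_sum[of 1 ?n ?n "\<lambda>r. diffM d r (?n + 1 - i)"] by simp
  qed
  also have "\<dots> = (\<Sum>r\<in>{1..?n}. \<Sum>i\<in>{1..?n + 1 - j}. diffM d r (?n + 1 - i))"
    by (rule sum.swap)
  also have "\<dots> = (\<Sum>r\<in>{1..?n}. \<Sum>c\<in>{j..?n}. diffM d r c)"
  proof (rule sum.cong[OF refl])
    fix r assume "r \<in> {1..?n}"
    show "(\<Sum>i\<in>{1..?n + 1 - j}. diffM d r (?n + 1 - i)) = (\<Sum>c\<in>{j..?n}. diffM d r c)"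
      using flip_sum[of 1 "?n + 1 - j" ?n "\<lambda>c. diffM d r c"] j by simp
  qed
  finally show ?thesis .
qed

theorem lemma9:
  fixes d :: "nat list" and k j :: nat
  assumes "degree_sequence d"
    and "1 \<le> k" and "k \<le> mval d"
    and "k < length d \<longrightarrow>
           (\<forall>c \<in> {1..length d}. \<not> (diffM d (k + 1) c \<noteq> 0 \<and> diffM d k c \<noteq> 0))"
    and "\<exists>i \<in> {1..k}. \<exists>c \<in> {1..length d}. diffM d i c \<noteq> 0"
    and "j \<in> {1..length d}"
    and "\<exists>i \<in> {1..k}. diffM d i j \<noteq> 0"
    and "\<forall>c \<in> {1..<j}. \<forall>i \<in> {1..k}. diffM d i c = 0"
  shows "Delta (length d + 1 - j) (comp_seq d) = Delta k d \<and>
         1 \<le> length d + 1 - j \<and> length d + 1 - j \<le> mval (comp_seq d)"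
proof -
  let ?n = "length d"
  let ?K = "?n + 1 - j"
  let ?e = "comp_seq d"
  have g: "good d" using ds_good[OF assms(1)] .
  have ge: "good ?e" using comp_good[OF g] .
  have j: "1 \<le> j" "j \<le> ?n" using assms(6) by auto
  have kn: "k \<le> ?n" using assms(3) mval_le_len[of d] by linarith
  obtain kj: "k < j" and ajj: "ent d j \<le> j - 1" and
    blk: "\<And>r c. k < r \<Longrightarrow> r \<le> ?n \<Longrightarrow> j \<le> c \<Longrightarrow> c \<le> ?n \<Longrightarrow> diffM d r c = 0"
    using block[OF g assms(2,3,4,6,7,8)] by blast
  have K1: "1 \<le> ?K" and Kn: "?K \<le> ?n" using j by auto
  have eK: "ent ?e ?K = ?n - 1 - ent d j" using comp_ent[of ?K d] K1 Kn j by simp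
  have bj: "ent d j \<le> ?n - 1" using g j unfolding good_def by auto
  have Km: "?K \<le> mval ?e"
    by (rule mval_le) (use K1 Kn eK ajj bj j in auto)
  have "Delta ?K ?e = (\<Sum>i\<in>{1..?K}. \<Sum>c\<in>{1..?n}. diffM ?e i c)"
    using RS[OF ge K1] Kn mval_ge[OF ge K1 Km] by simp
  also have "\<dots> = (\<Sum>r\<in>{1..?n}. \<Sum>c\<in>{j..?n}. diffM d r c)"
    using reindex[OF g j] .
  also have "\<dots> = (\<Sum>r\<in>{1..k}. \<Sum>c\<in>{j..?n}. diffM d r c) + (\<Sum>r\<in>{k<..?n}. \<Sum>c\<in>{j..?n}. diffM d r c)"
    by (subst split_ivl[OF kn], rule sum.union_disjoint) auto
  also have "(\<Sum>r\<in>{k<..?n}. \<Sum>c\<in>{j..?n}. diffM d r c) = 0"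
    using blk by (intro sum.neutral ballI) auto
  also have "(\<Sum>r\<in>{1..k}. \<Sum>c\<in>{j..?n}. diffM d r c) = (\<Sum>r\<in>{1..k}. \<Sum>c\<in>{1..?n}. diffM d r c)"
  proof (rule sum.cong[OF refl])
    fix r assume r: "r \<in> {1..k}"
    have "{1..?n} = {1..<j} \<union> {j..?n}" using j by auto
    then have "(\<Sum>c\<in>{1..?n}. diffM d r c) = (\<Sum>c\<in>{1..<j} \<union> {j..?n}. diffM d r c)"
      by simp
    also have "\<dots> = (\<Sum>c\<in>{1..<j}. diffM d r c) + (\<Sum>c\<in>{j..?n}. diffM d r c)"
      by (rule sum.union_disjoint) auto
    also have "(\<Sum>c\<in>{1..<j}. diffM d r c) = 0" using assms(8) r by (intro sum.neutral) auto
    finally show "(\<Sum>c\<in>{j..?n}. diffM d r c) = (\<Sum>c\<in>{1..?n}. diffM d r c)" by simp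
  qed
  also have "\<dots> = Delta k d"
    using RS[OF g assms(2) kn] mval_ge[OF g assms(2,3)] by simp
  finally show ?thesis using K1 Km by simp
qed


end
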